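(* Let $g,h>\tfrac12$, let $\mathcal{D}=((d_1,t_1),\ldots,(d_M,t_M))$ be an ordered list of pairwise distinct seed labels for the parameters $(g,h)$, and let $\mathcal{D}'=((d_1,\bar t_1),\ldots,(d_M,\bar t_M))$, where $\bar{\mathrm{I}}=\mathrm{II}$ and $\bar{\mathrm{II}}=\mathrm{I}$ (so $\mathcal{D}'$ is a list of seed labels for the parameters $(h,g)$). Then for every $n\in\mathbb{Z}_{\ge0}$ and $-1<\eta<1$, $$P_{\mathcal{D},n}\big(-\eta;(g,h)\big)=(-1)^{n+\frac12M(M+1)+\sum_{k=1}^Md_k}\,P_{\mathcal{D}',n}\big(\eta;(h,g)\big),$$ $$\Xi_{\mathcal{D}}\big(-\eta;(g,h)\big)=(-1)^{\frac12M(M-1)+\sum_{k=1}^Md_k}\,\Xi_{\mathcal{D}'}\big(\eta;(h,g)\big).$$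
   Context: $[a]'$ denotes the greatest integer strictly less than $a$; $(a)_k=a(a+1)\cdots(a+k-1)$, $(a)_0=1$. For real $\alpha,\beta$, $m\in\mathbb{Z}_{\ge0}$, $P^{(\alpha,\beta)}_m(\eta)=\frac{1}{m!}\sum_{k=0}^m\frac{(-m)_k(m+\alpha+\beta+1)_k(\alpha+k+1)_{m-k}}{k!}\big(\frac{1-\eta}{2}\big)^k$. For parameters $(g,h)$ with $g,h>\frac12$, a seed label is a pair $(\mathrm{v},t)$, $t\in\{\mathrm{I},\mathrm{II}\}$, with $\mathrm{v}\in\{0,\ldots,[h-\frac12]'\}$ if $t=\mathrm{I}$ and $\mathrm{v}\in\{0,\ldots,[g-\frac12]'\}$ if $t=\mathrm{II}$. For $-1<\eta<1$ let $\mu_{(\mathrm{v},\mathrm{I})}(\eta;(g,h))=\big(\frac{1+\eta}{2}\big)^{\frac12-h}P^{(g-\frac12,\frac12-h)}_{\mathrm{v}}(\eta)$, $\mu_{(\mathrm{v},\mathrm{II})}(\eta;(g,h))=\big(\frac{1-\eta}{2}\big)^{\frac12-g}P^{(\frac12-g,h-\frac12)}_{\mathrm{v}}(\eta)$, $P_n(\eta;(g,h))=P^{(g-\frac12,h-\frac12)}_n(\eta)$, and $\mathrm{W}[f_1,\ldots,f_m](\eta)=\det\big(\frac{d^{j-1}f_k}{d\eta^{j-1}}\big)_{1\le j,k\le m}$. For an ordered list $\mathcal{D}=((d_1,t_1),\ldots,(d_M,t_M))$ of seed labels with $M_{\mathrm{I}}$ of Type I and $M_{\mathrm{II}}$ of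 Type II, $\Xi_{\mathcal{D}}(\eta;(g,h))=\mathrm{W}[\mu_{(d_1,t_1)},\ldots,\mu_{(d_M,t_M)}](\eta)\big(\frac{1-\eta}{2}\big)^{(M_{\mathrm{I}}+g-\frac12)M_{\mathrm{II}}}\big(\frac{1+\eta}{2}\big)^{(M_{\mathrm{II}}+h-\frac12)M_{\mathrm{I}}}$ and $P_{\mathcal{D},n}(\eta;(g,h))=\mathrm{W}[\mu_{(d_1,t_1)},\ldots,\mu_{(d_M,t_M)},P_n](\eta)\big(\frac{1-\eta}{2}\big)^{(M_{\mathrm{I}}+g+\frac12)M_{\mathrm{II}}}\big(\frac{1+\eta}{2}\big)^{(M_{\mathrm{II}}+h+\frac12)M_{\mathrm{I}}}$, where all $\mu$'s and $P_n$ are taken at parameters $(g,h)$ (the multi-indexed Jacobi polynomials). These are polynomials in $\eta$, so they may be evaluated at $-\eta$. *)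

theory Defs
  imports "HOL-Analysis.Derivative" "Jordan_Normal_Form.Determinant"
begin

datatype stype = TI | TII

type_synonym seed = "nat \<times> stype"

fun flip_type :: "stype \<Rightarrow> stype" where
  "flip_type TI = TII" | "flip_type TII = TI"

definition jacobiP :: "real \<Rightarrow> real \<Rightarrow> nat \<Rightarrow> real \<Rightarrow> real" where
  "jacobiP \<alpha> \<beta> m \<eta> = (1 / fact m) *
     (\<Sum>k=0..m. pochhammer (- real m) k * pochhammer (real m + \<alpha> + \<beta> + 1) k
        * pochhammer (\<alpha> + real k + 1) (m - k) / fact k * ((1 - \<eta>) / 2) ^ k)"

text \<open>Seed labels for parameters (g,h): v <= [h-1/2]' means v < h - 1/2 (type I),
  v <= [g-1/2]' means v < g - 1/2 (type II).\<close>
fun seed_label :: "real \<Rightarrow> real \<Rightarrow> seed \<Rightarrow> bool" where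
  "seed_label g h (v, TI) = (real v < h - 1/2)"
| "seed_label g h (v, TII) = (real v < g - 1/2)"

fun mu :: "real \<Rightarrow> real \<Rightarrow> seed \<Rightarrow> real \<Rightarrow> real" where
  "mu g h (v, TI) \<eta> = ((1 + \<eta>) / 2) powr (1/2 - h) * jacobiP (g - 1/2) (1/2 - h) v \<eta>"
| "mu g h (v, TII) \<eta> = ((1 - \<eta>) / 2) powr (1/2 - g) * jacobiP (1/2 - g) (h - 1/2) v \<eta>"

definition Pgh :: "real \<Rightarrow> real \<Rightarrow> nat \<Rightarrow> real \<Rightarrow> real" where
  "Pgh g h n \<eta> = jacobiP (g - 1/2) (h - 1/2) n \<eta>"

definition wronskian :: "(real \<Rightarrow> real) list \<Rightarrow> real \<Rightarrow> real" where
  "wronskian fs \<eta> = Determinant.det (Matrix.mat (length fs) (length fs) (\<lambda>(j, k). (deriv ^^ j) (fs ! k) \<eta>))"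

definition count_I :: "seed list \<Rightarrow> nat" where
  "count_I D = length (filter (\<lambda>s. snd s = TI) D)"

definition count_II :: "seed list \<Rightarrow> nat" where
  "count_II D = length (filter (\<lambda>s. snd s = TII) D)"

definition Xi :: "seed list \<Rightarrow> real \<Rightarrow> real \<Rightarrow> real \<Rightarrow> real" where
  "Xi D g h \<eta> = wronskian (map (mu g h) D) \<eta>
     * ((1 - \<eta>) / 2) powr ((real (count_I D) + g - 1/2) * real (count_II D))
     * ((1 + \<eta>) / 2) powr ((real (count_II D) + h - 1/2) * real (count_I D))"

definition PD :: "seed list \<Rightarrow> nat \<Rightarrow> real \<Rightarrow> real \<Rightarrow> real \<Rightarrow> real" where
  "PD D n g h \<eta> = wronskian (map (mu g h) D @ [Pgh g h n]) \<eta>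
     * ((1 - \<eta>) / 2) powr ((real (count_I D) + g + 1/2) * real (count_II D))
     * ((1 + \<eta>) / 2) powr ((real (count_II D) + h + 1/2) * real (count_I D))"

definition flipD :: "seed list \<Rightarrow> seed list" where
  "flipD D = map (\<lambda>(d, t). (d, flip_type t)) D"

end

theory Submission imports Defs begin

lemma T_ident:
  "(\<Sum>i\<le>L. (-1)^i * real (L choose i) * pochhammer c i * pochhammer (A + real i) (L - i))
    = pochhammer (A - c) L"
proof (induction L arbitrary: A c)
  case 0
  then show ?case by simp
next
  case (Suc L)
  define f where "f i = (-1::real)^i * real (L choose i) * pochhammer c i * pochhammer (A + real i) (Suc L - i)" for i
  define g where "g i = (-1::real)^(Suc i) * real (L choose i) * pochhammer c (Suc i) * pochhammer (A + real (Suc i)) (Suc L - Suc i)" for i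
  have split: "(\<Sum>i\<le>Suc L. (-1)^i * real (Suc L choose i) * pochhammer c i * pochhammer (A + real i) (Suc L - i))
      = (\<Sum>i\<le>Suc L. f i) + (\<Sum>i\<le>L. g i)"
  proof -
    have "(\<Sum>i\<le>Suc L. (-1)^i * real (Suc L choose i) * pochhammer c i * pochhammer (A + real i) (Suc L - i))
       = pochhammer A (Suc L) + (\<Sum>i\<le>L. (-1)^(Suc i) * real (Suc L choose Suc i) * pochhammer c (Suc i) * pochhammer (A + real (Suc i)) (Suc L - Suc i))"
      by (subst sum.atMost_Suc_shift) simp
    also have "\<dots> = pochhammer A (Suc L) + (\<Sum>i\<le>L. f (Suc i)) + (\<Sum>i\<le>L. g i)"
      by (simp add: f_def g_def sum.distrib[symmetric] algebra_simps)
    also have "pochhammer A (Suc L) + (\<Sum>i\<le>L. f (Suc i)) = (\<Sum>i\<le>Suc L. f i)"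
      by (subst sum.atMost_Suc_shift) (simp add: f_def)
    finally show ?thesis .
  qed
  have f1: "(\<Sum>i\<le>Suc L. f i) = (A + real L) * pochhammer (A - c) L"
  proof -
    have "(\<Sum>i\<le>Suc L. f i) = (\<Sum>i\<le>L. f i)" by (simp add: f_def)
    also have "\<dots> = (\<Sum>i\<le>L. (A + real L) * ((-1)^i * real (L choose i) * pochhammer c i * pochhammer (A + real i) (L - i)))"
    proof (rule sum.cong[OF refl])
      fix i assume "i \<in> {..L}"
      then have "Suc L - i = Suc (L - i)" "real (L - i) = real L - real i" by auto
      then show "f i = (A + real L) * ((-1)^i * real (L choose i) * pochhammer c i * pochhammer (A + real i) (L - i))"
        unfolding f_def by (simp add: pochhammer_rec' algebra_simps)
    qed
    also have "\<dots> = (A + real L) * pochhammer (A - c) L"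
      by (simp add: sum_distrib_left[symmetric] Suc.IH)
    finally show ?thesis .
  qed
  have g1: "(\<Sum>i\<le>L. g i) = - c * pochhammer (A - c) L"
  proof -
    have "(\<Sum>i\<le>L. g i) = (\<Sum>i\<le>L. (- c) * ((-1)^i * real (L choose i) * pochhammer (c+1) i * pochhammer ((A+1) + real i) (L - i)))"
      by (rule sum.cong[OF refl]) (simp add: g_def pochhammer_rec algebra_simps)
    also have "\<dots> = (- c) * (\<Sum>i\<le>L. (-1)^i * real (L choose i) * pochhammer (c+1) i * pochhammer ((A+1) + real i) (L - i))"
      by (rule sum_distrib_left[symmetric])
    also have "\<dots> = - c * pochhammer ((A+1) - (c+1)) L"
      by (subst Suc.IH) simp
    finally show ?thesis by simp
  qed
  show ?case using split f1 g1 by (simp add: pochhammer_rec' algebra_simps)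
qed

lemma swap_tri: "(\<Sum>k\<le>(m::nat). \<Sum>j\<le>k. a k j) = (\<Sum>j\<le>m. \<Sum>k=j..m. (a k j::real))"
proof -
  have "(\<Sum>k\<le>m. \<Sum>j\<le>k. a k j) = (\<Sum>k\<le>m. \<Sum>j\<le>m. if j \<le> k then a k j else 0)"
  proof (rule sum.cong[OF refl])
    fix k assume "k \<in> {..m}"
    then have "{j\<in>{..m}. j \<le> k} = {..k}" by auto
    then show "(\<Sum>j\<le>k. a k j) = (\<Sum>j\<le>m. if j \<le> k then a k j else 0)"
      using sum.inter_filter[of "{..m}" "\<lambda>j. a k j" "\<lambda>j. j \<le> k"] by simp
  qed
  also have "\<dots> = (\<Sum>j\<le>m. \<Sum>k\<le>m. if j \<le> k then a k j else 0)"
    by (rule sum.swap)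
  also have "\<dots> = (\<Sum>j\<le>m. \<Sum>k=j..m. a k j)"
  proof (rule sum.cong[OF refl])
    fix j assume "j \<in> {..m}"
    have "{k\<in>{..m}. j \<le> k} = {j..m}" by auto
    then show "(\<Sum>k\<le>m. if j \<le> k then a k j else 0) = (\<Sum>k=j..m. a k j)"
      using sum.inter_filter[of "{..m}" "\<lambda>k. a k j" "\<lambda>k. j \<le> k"] by simp
  qed
  finally show ?thesis .
qed

lemma coeff_ident:
  assumes "j \<le> m"
  shows "(\<Sum>k=j..m. (-1)^k * real (m choose k) * real (k choose j) * pochhammer (real m + a + b + 1) k
            * pochhammer (a + real k + 1) (m - k))
       = (-1)^m * real (m choose j) * pochhammer (real m + a + b + 1) j * pochhammer (b + real j + 1) (m - j)"
proof -
  define L where "L = m - j"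
  define N where "N = real m + a + b + 1"
  have m: "m = L + j" using assms L_def by simp
  have "(\<Sum>k=j..m. (-1)^k * real (m choose k) * real (k choose j) * pochhammer N k
            * pochhammer (a + real k + 1) (m - k))
      = (\<Sum>i=0..L. (-1)^(i+j) * real (m choose (i+j)) * real ((i+j) choose j) * pochhammer N (i+j)
            * pochhammer (a + real (i+j) + 1) (m - (i+j)))"
    using sum.shift_bounds_cl_nat_ivl[of "\<lambda>k. (-1)^k * real (m choose k) * real (k choose j) * pochhammer N k
            * pochhammer (a + real k + 1) (m - k)" 0 j L] m by simp
  also have "\<dots> = (\<Sum>i\<le>L. ((-1)^j * real (m choose j) * pochhammer N j) *
        ((-1)^i * real (L choose i) * pochhammer (N + real j) i * pochhammer ((a + real j + 1) + real i) (L - i)))"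
  proof (rule sum.cong)
    fix i assume i: "i \<in> {..L}"
    have c: "real (m choose (i+j)) * real ((i+j) choose j) = real (m choose j) * real (L choose i)"
      using choose_mult[of j "i+j" m] i m by (simp flip: of_nat_mult)
    have p: "pochhammer N (i+j) = pochhammer N j * pochhammer (N + real j) i"
      using pochhammer_product'[of N j i] by (simp add: add.commute)
    have d: "m - (i+j) = L - i" using m by simp
    show "(-1)^(i+j) * real (m choose (i+j)) * real ((i+j) choose j) * pochhammer N (i+j)
            * pochhammer (a + real (i+j) + 1) (m - (i+j)) =
         ((-1)^j * real (m choose j) * pochhammer N j) *
        ((-1)^i * real (L choose i) * pochhammer (N + real j) i * pochhammer ((a + real j + 1) + real i) (L - i))"
      apply (simp only: d p power_add)
      using c by (simp add: algebra_simps)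
  qed (auto simp: atLeast0AtMost)
  also have "\<dots> = ((-1)^j * real (m choose j) * pochhammer N j) * pochhammer ((a + real j + 1) - (N + real j)) L"
    by (simp only: sum_distrib_left[symmetric] T_ident)
  also have "(a + real j + 1) - (N + real j) = - (b + real j + real L)"
    using m by (simp add: N_def)
  also have "pochhammer (- (b + real j + real L)) L = (-1)^L * pochhammer (b + real j + 1) L"
    by (subst pochhammer_minus) (simp add: algebra_simps)
  finally show ?thesis
    unfolding N_def[symmetric] using m by (simp add: L_def[symmetric] power_add algebra_simps)
qed

lemma poch_neg_fact: "pochhammer (- real m) k / fact k = (-1)^k * real (m choose k)"
proof -
  have "real (m choose k) = (-1)^k * pochhammer (- real m) k / fact k"
    by (simp add: binomial_gbinomial gbinomial_pochhammer)
  then show ?thesis by simp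
qed

lemma poch_neg: "pochhammer (- real m) k = (-1)^k * real (m choose k) * fact k"
  using poch_neg_fact[of m k] by (simp add: field_simps)

lemma jacobi_alt: "jacobiP a b m y = (1 / fact m) *
     (\<Sum>k\<le>m. (-1)^k * real (m choose k) * pochhammer (real m + a + b + 1) k
        * pochhammer (a + real k + 1) (m - k) * ((1 - y) / 2) ^ k)"
  unfolding jacobiP_def atLeast0AtMost
  by (rule arg_cong[where f="\<lambda>s. (1 / fact m) * s"], rule sum.cong[OF refl])
     (simp add: poch_neg)

lemma jacobi_reflect: "jacobiP a b m (- x) = (-1)^m * jacobiP b a m x"
proof -
  define t where "t = (1 - x) / 2"
  define N where "N = real m + a + b + 1"
  have N': "real m + b + a + 1 = N" by (simp add: N_def)
  have e: "(1 - - x) / 2 = 1 - t" by (simp add: t_def field_simps)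
  define c where "c k = (-1)^k * real (m choose k) * pochhammer N k * pochhammer (a + real k + 1) (m - k)" for k
  have "(\<Sum>k\<le>m. c k * (1 - t) ^ k) = (\<Sum>k\<le>m. \<Sum>j\<le>k. c k * real (k choose j) * (-1)^j * t^j)"
  proof (rule sum.cong[OF refl])
    fix k
    have "(1 - t) ^ k = (\<Sum>j\<le>k. real (k choose j) * (-t)^j * 1^(k-j))"
      using binomial_ring[of "-t" 1 k] by simp
    also have "\<dots> = (\<Sum>j\<le>k. real (k choose j) * (-1)^j * t^j)"
      by (rule sum.cong[OF refl]) (simp only: power_minus[of t] mult.assoc power_one mult_1_right)
    finally show "c k * (1 - t) ^ k = (\<Sum>j\<le>k. c k * real (k choose j) * (-1)^j * t^j)"
      by (simp add: sum_distrib_left mult.assoc)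
  qed
  also have "\<dots> = (\<Sum>j\<le>m. \<Sum>k=j..m. c k * real (k choose j) * (-1)^j * t^j)"
    by (rule swap_tri)
  also have "\<dots> = (\<Sum>j\<le>m. ((-1)^j * t^j) * (\<Sum>k=j..m. (-1)^k * real (m choose k) * real (k choose j) * pochhammer N k
            * pochhammer (a + real k + 1) (m - k)))"
    by (rule sum.cong[OF refl]) (simp add: sum_distrib_left c_def mult_ac)
  also have "\<dots> = (\<Sum>j\<le>m. ((-1)^j * t^j) * ((-1)^m * real (m choose j) * pochhammer N j * pochhammer (b + real j + 1) (m - j)))"
    by (rule sum.cong[OF refl]) (simp add: N_def coeff_ident)
  also have "\<dots> = (-1)^m * (\<Sum>j\<le>m. (-1)^j * real (m choose j) * pochhammer N j * pochhammer (b + real j + 1) (m - j) * t^j)"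
    by (simp add: sum_distrib_left mult_ac)
  finally have key: "(\<Sum>k\<le>m. c k * (1 - t) ^ k) = \<dots>" .
  show ?thesis
    unfolding jacobi_alt e N' N_def[symmetric] t_def[symmetric]
    using key by (simp add: c_def)
qed

lemma det_scale:
  fixes r s :: "nat \<Rightarrow> real"
  shows "Determinant.det (Matrix.mat n n (\<lambda>(i,j). r i * s j * A i j))
       = (\<Prod>i=0..<n. r i) * (\<Prod>j=0..<n. s j) * Determinant.det (Matrix.mat n n (\<lambda>(i,j). A i j))"
proof -
  have c1: "Matrix.mat n n (\<lambda>(i,j). r i * s j * A i j) \<in> carrier_mat n n" by simp
  have c2: "Matrix.mat n n (\<lambda>(i,j). A i j) \<in> carrier_mat n n" by simp
  have "Determinant.det (Matrix.mat n n (\<lambda>(i,j). r i * s j * A i j))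
      = (\<Sum>p\<in>{p. p permutes {0..<n}}. signof p * (\<Prod>i=0..<n. r i * s (p i) * A i (p i)))"
    unfolding det_def'[OF c1] by (intro sum.cong refl arg_cong[where f="\<lambda>x. _ * x"] prod.cong) auto
  also have "\<dots> = (\<Sum>p\<in>{p. p permutes {0..<n}}. ((\<Prod>i=0..<n. r i) * (\<Prod>j=0..<n. s j)) * (signof p * (\<Prod>i=0..<n. A i (p i))))"
  proof (rule sum.cong[OF refl])
    fix p assume "p \<in> {p. p permutes {0..<n}}"
    then have pp: "p permutes {0..<n}" by simp
    have "(\<Prod>i=0..<n. s (p i)) = (\<Prod>j=0..<n. s j)"
      using prod.permute[OF pp, of s] by (simp add: comp_def)
    then show "signof p * (\<Prod>i=0..<n. r i * s (p i) * A i (p i)) =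
         ((\<Prod>i=0..<n. r i) * (\<Prod>j=0..<n. s j)) * (signof p * (\<Prod>i=0..<n. A i (p i)))"
      by (simp add: prod.distrib)
  qed
  also have "\<dots> = (\<Prod>i=0..<n. r i) * (\<Prod>j=0..<n. s j) *
      (\<Sum>p\<in>{p. p permutes {0..<n}}. signof p * (\<Prod>i=0..<n. A i (p i)))"
    by (simp add: sum_distrib_left)
  also have "(\<Sum>p\<in>{p. p permutes {0..<n}}. signof p * (\<Prod>i=0..<n. A i (p i)))
       = Determinant.det (Matrix.mat n n (\<lambda>(i,j). A i j))"
    unfolding det_def'[OF c2] by (intro sum.cong refl arg_cong[where f="\<lambda>x. _ * x"] prod.cong) auto
  finally show ?thesis .
qed

inductive_set XS :: "(real \<Rightarrow> real) set" where
  base: "(\<lambda>x. c * ((1 + x) / 2) powr r * ((1 - x) / 2) powr s) \<in> XS"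
| add: "f \<in> XS \<Longrightarrow> g \<in> XS \<Longrightarrow> (\<lambda>x. f x + g x) \<in> XS"

definition SI :: "real set" where "SI = {-1<..<1}"

lemma open_SI: "open SI" by (simp add: SI_def)

lemma XS_deriv:
  assumes "f \<in> XS"
  shows "(\<forall>x\<in>SI. f field_differentiable (at x)) \<and> (\<exists>g\<in>XS. \<forall>x\<in>SI. deriv f x = g x)"
  using assms
proof induction
  case (base c r s)
  define g where "g x = c * ((1 + x) / 2) powr r * ((1 - x) / 2) powr s" for x
  define g' where "g' x = c * (r / 2) * ((1 + x) / 2) powr (r - 1) * ((1 - x) / 2) powr s
       + (- c * (s / 2)) * ((1 + x) / 2) powr r * ((1 - x) / 2) powr (s - 1)" for x
  have D: "(g has_field_derivative g' x) (at x)" if "x \<in> SI" for x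
  proof -
    from that have p1: "(1 + x) / 2 > 0" and p2: "(1 - x) / 2 > 0" by (auto simp: SI_def)
    have d1: "((\<lambda>x. ((1 + x) / 2) powr r) has_real_derivative r * ((1 + x) / 2) powr (r - 1) * (1/2)) (at x)"
      using DERIV_fun_powr[of "\<lambda>x. (1 + x) / 2" "1/2" x r] p1 by (auto intro!: derivative_eq_intros)
    have d2: "((\<lambda>x. ((1 - x) / 2) powr s) has_real_derivative s * ((1 - x) / 2) powr (s - 1) * (-1/2)) (at x)"
      using DERIV_fun_powr[of "\<lambda>x. (1 - x) / 2" "-1/2" x s] p2 by (auto intro!: derivative_eq_intros)
    have "((\<lambda>x. c * ((1 + x) / 2) powr r * ((1 - x) / 2) powr s) has_real_derivative
        c * (r * ((1 + x) / 2) powr (r - 1) * (1/2)) * ((1 - x) / 2) powr s +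
        c * ((1 + x) / 2) powr r * (s * ((1 - x) / 2) powr (s - 1) * (-1/2))) (at x)"
      by (rule DERIV_cong[OF DERIV_mult[OF DERIV_cmult[OF d1, of c] d2]]) (simp add: algebra_simps)
    then show ?thesis unfolding g_def by (rule DERIV_cong) (simp add: g'_def algebra_simps)
  qed
  have "g' \<in> XS" unfolding g'_def by (intro XS.add XS.base)
  moreover have "\<forall>x\<in>SI. deriv g x = g' x" using D DERIV_imp_deriv by blast
  moreover have "\<forall>x\<in>SI. g field_differentiable (at x)" using D field_differentiable_def by blast
  ultimately show ?case unfolding g_def by blast
next
  case (add f g)
  then obtain f' g' where f': "f' \<in> XS" "\<forall>x\<in>SI. deriv f x = f' x" and g': "g' \<in> XS" "\<forall>x\<in>SI. deriv g x = g' x"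
    by blast
  have "\<forall>x\<in>SI. deriv (\<lambda>x. f x + g x) x = f' x + g' x"
    using add f' g' by (simp add: deriv_add)
  moreover have "(\<lambda>x. f' x + g' x) \<in> XS" using f' g' by (intro XS.add)
  moreover have "\<forall>x\<in>SI. (\<lambda>x. f x + g x) field_differentiable (at x)"
    using add by (auto intro: field_differentiable_add)
  ultimately show ?case by (intro conjI bexI[of _ "\<lambda>x. f' x + g' x"]) auto
qed

lemma agree_deriv:
  assumes "\<forall>x\<in>SI. F x = G x" "x \<in> SI"
  shows "deriv F x = deriv G x"
proof (rule deriv_cong_ev[OF _ refl])
  show "\<forall>\<^sub>F y in nhds x. F y = G y"
    using assms open_SI by (auto simp: eventually_nhds)
qed

definition smoothSI :: "(real \<Rightarrow> real) \<Rightarrow> bool" where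
  "smoothSI F \<longleftrightarrow> (\<forall>j. \<forall>x\<in>SI. (deriv ^^ j) F field_differentiable (at x))"

lemma smooth_from_XS:
  assumes "f \<in> XS" "\<forall>x\<in>SI. F x = f x"
  shows "smoothSI F"
proof -
  have "\<exists>g\<in>XS. \<forall>x\<in>SI. (deriv ^^ j) F x = g x" for j
  proof (induction j)
    case 0 then show ?case using assms by auto
  next
    case (Suc j)
    then obtain g where g: "g \<in> XS" "\<forall>x\<in>SI. (deriv ^^ j) F x = g x" by blast
    then obtain g' where g': "g' \<in> XS" "\<forall>x\<in>SI. deriv g x = g' x" using XS_deriv by blast
    have "\<forall>x\<in>SI. (deriv ^^ Suc j) F x = g' x"
    proof
      fix x assume x: "x \<in> SI"
      have "(deriv ^^ Suc j) F x = deriv ((deriv ^^ j) F) x" by simp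
      also have "\<dots> = deriv g x" using agree_deriv[OF g(2) x] .
      finally show "(deriv ^^ Suc j) F x = g' x" using g' x by simp
    qed
    then show ?case using g' by blast
  qed
  then show ?thesis unfolding smoothSI_def
  proof (intro allI ballI)
    fix j x assume h: "\<And>j. \<exists>g\<in>XS. \<forall>x\<in>SI. (deriv ^^ j) F x = g x" and x: "x \<in> SI"
    obtain g where g: "g \<in> XS" "\<forall>x\<in>SI. (deriv ^^ j) F x = g x" using h by blast
    have "g field_differentiable (at x)" using XS_deriv[OF g(1)] x by blast
    then obtain D where "(g has_field_derivative D) (at x)" by (auto simp: field_differentiable_def)
    then have "((deriv ^^ j) F has_field_derivative D) (at x)"
      by (rule has_field_derivative_transform_within_open[OF _ open_SI x]) (use g in auto)
    then show "(deriv ^^ j) F field_differentiable (at x)" by (auto simp: field_differentiable_def)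
  qed
qed

lemma reflect_deriv:
  assumes f: "\<forall>y\<in>SI. f y = c * F (-y)" and sm: "smoothSI F"
  shows "\<forall>y\<in>SI. (deriv ^^ j) f y = c * (-1)^j * (deriv ^^ j) F (-y)"
proof (induction j)
  case 0 then show ?case using f by simp
next
  case (Suc j)
  show ?case
  proof
    fix y assume y: "y \<in> SI"
    have my: "-y \<in> SI" using y by (auto simp: SI_def)
    have "(deriv ^^ j) F field_differentiable (at (-y))" using sm my unfolding smoothSI_def by blast
    then have D: "((deriv ^^ j) F has_field_derivative deriv ((deriv ^^ j) F) (-y)) (at (-y))"
      by (rule field_differentiable_derivI)
    have D2: "((\<lambda>z. c * (-1)^j * (deriv ^^ j) F (-z)) has_field_derivative
          c * (-1)^j * (deriv ((deriv ^^ j) F) (-y) * (-1))) (at y)"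
    proof -
      have Dm: "((\<lambda>z. -z) has_field_derivative -1) (at y)" by (auto intro!: derivative_eq_intros)
      have "((\<lambda>z. (deriv ^^ j) F (-z)) has_field_derivative deriv ((deriv ^^ j) F) (-y) * (-1)) (at y)"
        using DERIV_chain2[where g="\<lambda>z. -z" and x=y, OF D Dm] by simp
      then show ?thesis by (rule DERIV_cmult)
    qed
    have "(deriv ^^ Suc j) f y = deriv ((deriv ^^ j) f) y" by simp
    also have "\<dots> = deriv (\<lambda>z. c * (-1)^j * (deriv ^^ j) F (-z)) y"
      by (rule agree_deriv[OF Suc y])
    also have "\<dots> = c * (-1)^j * (deriv ((deriv ^^ j) F) (-y) * (-1))"
      by (rule DERIV_imp_deriv[OF D2])
    finally show "(deriv ^^ Suc j) f y = c * (-1)^(Suc j) * (deriv ^^ Suc j) F (-y)" by simp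
  qed
qed

lemma XS_sum:
  assumes "\<And>k. (\<lambda>x. F k x) \<in> XS"
  shows "(\<lambda>x. \<Sum>k\<le>(m::nat). F k x) \<in> XS"
proof (induction m)
  case 0 then show ?case using assms by simp
next
  case (Suc m) then show ?case by (simp add: XS.add assms)
qed

lemma jacobi_XS_I:
  "\<exists>f\<in>XS. \<forall>x\<in>SI. ((1 + x) / 2) powr r * jacobiP \<alpha> \<beta> m x = f x"
proof -
  define C where "C k = (1 / fact m) * (pochhammer (- real m) k * pochhammer (real m + \<alpha> + \<beta> + 1) k
        * pochhammer (\<alpha> + real k + 1) (m - k) / fact k)" for k
  let ?f = "\<lambda>x. \<Sum>k\<le>m. C k * ((1 + x) / 2) powr r * ((1 - x) / 2) powr (real k)"
  have "?f \<in> XS" by (rule XS_sum) (rule XS.base)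
  moreover have "\<forall>x\<in>SI. ((1 + x) / 2) powr r * jacobiP \<alpha> \<beta> m x = ?f x"
  proof
    fix x assume x: "x \<in> SI"
    then have p: "(1 - x) / 2 > 0" and q: "1 + x \<noteq> 0" by (auto simp: SI_def)
    show "((1 + x) / 2) powr r * jacobiP \<alpha> \<beta> m x = ?f x"
      unfolding jacobiP_def atLeast0AtMost sum_distrib_left
      by (rule sum.cong[OF refl]) (simp add: C_def powr_realpow[OF p] q mult_ac)
  qed
  ultimately show ?thesis by (intro bexI[of _ ?f]) simp_all
qed

lemma jacobi_XS_II:
  "\<exists>f\<in>XS. \<forall>x\<in>SI. ((1 - x) / 2) powr r * jacobiP \<alpha> \<beta> m x = f x"
proof -
  define C where "C k = (1 / fact m) * (pochhammer (- real m) k * pochhammer (real m + \<alpha> + \<beta> + 1) k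
        * pochhammer (\<alpha> + real k + 1) (m - k) / fact k)" for k
  let ?f = "\<lambda>x. \<Sum>k\<le>m. C k * ((1 + x) / 2) powr 0 * ((1 - x) / 2) powr (r + real k)"
  have "?f \<in> XS" by (rule XS_sum) (rule XS.base)
  moreover have "\<forall>x\<in>SI. ((1 - x) / 2) powr r * jacobiP \<alpha> \<beta> m x = ?f x"
  proof
    fix x assume x: "x \<in> SI"
    then have p: "(1 - x) / 2 > 0" and q: "1 + x \<noteq> 0" by (auto simp: SI_def)
    show "((1 - x) / 2) powr r * jacobiP \<alpha> \<beta> m x = ?f x"
      unfolding jacobiP_def atLeast0AtMost sum_distrib_left
      by (rule sum.cong[OF refl]) (simp add: C_def powr_add powr_realpow[OF p] q mult_ac)
  qed
  ultimately show ?thesis by (intro bexI[of _ ?f]) simp_all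
qed

lemma smooth_mu: "smoothSI (mu g h s)"
proof (cases s)
  case (Pair d t)
  show ?thesis
  proof (cases t)
    case TI
    obtain f where "f \<in> XS" "\<forall>x\<in>SI. ((1 + x) / 2) powr (1/2 - h) * jacobiP (g - 1/2) (1/2 - h) d x = f x"
      using jacobi_XS_I by blast
    then show ?thesis using Pair TI by (intro smooth_from_XS[of f]) auto
  next
    case TII
    obtain f where "f \<in> XS" "\<forall>x\<in>SI. ((1 - x) / 2) powr (1/2 - g) * jacobiP (1/2 - g) (h - 1/2) d x = f x"
      using jacobi_XS_II by blast
    then show ?thesis using Pair TII by (intro smooth_from_XS[of f]) auto
  qed
qed

lemma smooth_P: "smoothSI (Pgh g h n)"
proof -
  obtain f where f: "f \<in> XS" "\<forall>x\<in>SI. ((1 + x) / 2) powr 0 * jacobiP (g - 1/2) (h - 1/2) n x = f x"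
    using jacobi_XS_I by blast
  have "\<forall>x\<in>SI. Pgh g h n x = f x"
  proof
    fix x assume x: "x \<in> SI"
    then have "1 + x \<noteq> 0" by (auto simp: SI_def)
    then show "Pgh g h n x = f x" using f(2)[rule_format, OF x] by (simp add: Pgh_def)
  qed
  then show ?thesis using f by (intro smooth_from_XS[of f])
qed

lemma mu_reflect: "mu g h (d, t) y = (-1)^d * mu h g (d, flip_type t) (-y)"
proof (cases t)
  case TI
  have "jacobiP (1/2 - h) (g - 1/2) d (-y) = (-1)^d * jacobiP (g - 1/2) (1/2 - h) d y"
    by (rule jacobi_reflect)
  then show ?thesis using TI by (simp add: power_mult_distrib[symmetric] mult.assoc[symmetric])
next
  case TII
  have "jacobiP (h - 1/2) (1/2 - g) d (-y) = (-1)^d * jacobiP (1/2 - g) (h - 1/2) d y"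
    by (rule jacobi_reflect)
  then show ?thesis using TII by (simp add: power_mult_distrib[symmetric] mult.assoc[symmetric])
qed

lemma P_reflect: "Pgh g h n y = (-1)^n * Pgh h g n (-y)"
  unfolding Pgh_def jacobi_reflect by (simp add: mult.assoc[symmetric] power_mult_distrib[symmetric])

lemma wronskian_reflect:
  assumes len: "length fs = length Fs"
    and rel: "\<forall>k<length fs. \<forall>y\<in>SI. (fs!k) y = c k * (Fs!k) (-y)"
    and sm: "\<forall>k<length Fs. smoothSI (Fs!k)"
    and eta: "\<eta> \<in> SI"
  shows "wronskian fs (-\<eta>) = (\<Prod>j=0..<length fs. (-1)^j) * (\<Prod>k=0..<length fs. c k) * wronskian Fs \<eta>"
proof -
  let ?M = "length fs"
  have me: "-\<eta> \<in> SI" using eta by (auto simp: SI_def)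
  have "Matrix.mat ?M ?M (\<lambda>(j, k). (deriv ^^ j) (fs ! k) (-\<eta>))
      = Matrix.mat ?M ?M (\<lambda>(j, k). (-1)^j * c k * (deriv ^^ j) (Fs ! k) \<eta>)"
  proof (rule eq_matI)
    fix j k assume j: "j < dim_row (Matrix.mat ?M ?M (\<lambda>(j, k). (-1)^j * c k * (deriv ^^ j) (Fs ! k) \<eta>))"
      and k: "k < dim_col (Matrix.mat ?M ?M (\<lambda>(j, k). (-1)^j * c k * (deriv ^^ j) (Fs ! k) \<eta>))"
    have kk: "k < length fs" using k by simp
    have "(deriv ^^ j) (fs ! k) (-\<eta>) = c k * (-1)^j * (deriv ^^ j) (Fs ! k) (- (-\<eta>))"
      using reflect_deriv[of "fs!k" "c k" "Fs!k" j] rel kk sm len me by auto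
    then show "Matrix.mat ?M ?M (\<lambda>(j, k). (deriv ^^ j) (fs ! k) (-\<eta>)) $$ (j, k) =
          Matrix.mat ?M ?M (\<lambda>(j, k). (-1)^j * c k * (deriv ^^ j) (Fs ! k) \<eta>) $$ (j, k)"
      using j k by simp
  qed auto
  then show ?thesis
    unfolding wronskian_def using len by (simp add: det_scale)
qed

lemma sum_upto: "2 * (\<Sum>j=0..<(M::nat). j) = M * (M - 1)"
  by (induction M) (auto simp: algebra_simps)

lemma prod_sign: "(\<Prod>j=0..<(M::nat). (-1::real)^j) = (-1)^(M * (M - 1) div 2)"
proof -
  have "(\<Prod>j=0..<M. (-1::real)^j) = (-1)^(\<Sum>j=0..<M. j)" by (simp add: power_sum)
  also have "(\<Sum>j=0..<M. j) = M * (M - 1) div 2" using sum_upto[of M] by simp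
  finally show ?thesis .
qed

lemma prod_fst: "(\<Prod>k=0..<length D. (-1::real)^(fst (D!k))) = (-1)^(sum_list (map fst D))"
  by (simp add: sum_list_sum_nth power_sum)

lemma count_flip: "count_I (flipD D) = count_II D" "count_II (flipD D) = count_I D"
proof -
  have "\<And>t. (flip_type t = TI) = (t = TII)" "\<And>t. (flip_type t = TII) = (t = TI)"
    by (case_tac t; simp)+
  then show "count_I (flipD D) = count_II D" "count_II (flipD D) = count_I D"
    by (induction D) (auto simp: count_I_def count_II_def flipD_def split: prod.splits)
qed

lemma flipD_nth: "k < length D \<Longrightarrow> flipD D ! k = (fst (D!k), flip_type (snd (D!k)))"
  by (simp add: flipD_def case_prod_beta)

theorem mainTheorem5:
  fixes g h :: real and D :: "seed list" and n :: nat and \<eta> :: real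
  assumes "g > 1/2" and "h > 1/2"
    and "\<forall>s \<in> set D. seed_label g h s"
    and "distinct D"
    and "-1 < \<eta>" and "\<eta> < 1"
  shows "PD D n g h (- \<eta>) =
           (-1) ^ (n + length D * (length D + 1) div 2 + sum_list (map fst D)) * PD (flipD D) n h g \<eta>
       \<and> Xi D g h (- \<eta>) =
           (-1) ^ (length D * (length D - 1) div 2 + sum_list (map fst D)) * Xi (flipD D) h g \<eta>"
proof -
  have eta: "\<eta> \<in> SI" using assms by (simp add: SI_def)
  let ?M = "length D"
  have muk: "\<forall>y\<in>SI. mu g h (D!k) y = (-1)^(fst (D!k)) * mu h g (flipD D ! k) (-y)" if "k < ?M" for k
    using that mu_reflect[of g h "fst (D!k)" "snd (D!k)"] by (simp add: flipD_nth)
  have W1: "wronskian (map (mu g h) D) (-\<eta>) =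
      (-1)^(?M * (?M - 1) div 2 + sum_list (map fst D)) * wronskian (map (mu h g) (flipD D)) \<eta>"
  proof -
    have "wronskian (map (mu g h) D) (-\<eta>) = (\<Prod>j=0..<length (map (mu g h) D). (-1)^j) * (\<Prod>k=0..<length (map (mu g h) D). (-1::real)^(fst (D!k)))
        * wronskian (map (mu h g) (flipD D)) \<eta>"
      by (rule wronskian_reflect) (use muk eta smooth_mu in \<open>auto simp: flipD_def\<close>)
    then show ?thesis by (simp add: prod_sign prod_fst power_add)
  qed
  define c where "c k = (if k < ?M then (-1::real)^(fst (D!k)) else (-1)^n)" for k
  have W2: "wronskian (map (mu g h) D @ [Pgh g h n]) (-\<eta>) =
      (-1)^(n + ?M * (?M + 1) div 2 + sum_list (map fst D)) * wronskian (map (mu h g) (flipD D) @ [Pgh h g n]) \<eta>"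
  proof -
    have rel: "\<forall>k<length (map (mu g h) D @ [Pgh g h n]). \<forall>y\<in>SI.
        ((map (mu g h) D @ [Pgh g h n])!k) y = c k * ((map (mu h g) (flipD D) @ [Pgh h g n])!k) (-y)"
    proof (intro allI impI ballI)
      fix k y assume k: "k < length (map (mu g h) D @ [Pgh g h n])" and y: "y \<in> SI"
      show "((map (mu g h) D @ [Pgh g h n])!k) y = c k * ((map (mu h g) (flipD D) @ [Pgh h g n])!k) (-y)"
      proof (cases "k < ?M")
        case True
        then show ?thesis using muk[OF True] y by (simp add: nth_append c_def flipD_def)
      next
        case False
        then have "k = ?M" using k by simp
        then show ?thesis by (simp add: nth_append c_def flipD_def P_reflect[of g h n y])
      qed
    qed
    have sm: "\<forall>k<length (map (mu h g) (flipD D) @ [Pgh h g n]). smoothSI ((map (mu h g) (flipD D) @ [Pgh h g n])!k)"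
      by (auto simp: nth_append smooth_mu smooth_P)
    have "wronskian (map (mu g h) D @ [Pgh g h n]) (-\<eta>) = (\<Prod>j=0..<Suc ?M. (-1)^j) * (\<Prod>k=0..<Suc ?M. c k)
        * wronskian (map (mu h g) (flipD D) @ [Pgh h g n]) \<eta>"
      using wronskian_reflect[OF _ rel sm eta] by (simp add: flipD_def)
    also have "(\<Prod>k=0..<Suc ?M. c k) = (\<Prod>k=0..<?M. (-1::real)^(fst (D!k))) * (-1)^n"
      by (simp add: c_def)
    also have "(\<Prod>j=0..<Suc ?M. (-1::real)^j) = (-1)^(?M * (?M + 1) div 2)"
      by (simp only: prod_sign) (simp add: mult.commute)
    finally show ?thesis by (simp add: prod_fst power_add mult_ac)
  qed
  have e1: "(1 - - \<eta>) / 2 = (1 + \<eta>) / 2" "(1 + - \<eta>) / 2 = (1 - \<eta>) / 2" by simp_all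
  show ?thesis
    unfolding PD_def Xi_def e1 W1 W2 count_flip by (simp add: mult_ac)
qed

end
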